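(* For any strict pin words $u$ and $w$, $u\preceq w$ if and only if $\phi(u)$ is a factor of $\phi(w)$.
   Context: Pins are points of $\mathbb{Z}^2$. A pin $p$ separates a set $P$ from a set $Q$ horizontally (resp. vertically) if the horizontal (resp. vertical) line through $p$ has $P$ strictly on one side and $Q$ strictly on the other. A pin sequence is a sequence $(p_1,\dots,p_k)$ of pins, no two in a common row or column, such that for every $i\ge2$, $p_i$ lies outside the bounding box of $\{p_1,\dots,p_{i-1}\}$ and either $p_i$ separates $p_{i-1}$ from $\{p_1,\dots,p_{i-2}\}$ or $p_i$ is independent from $\{p_1,\dots,p_{i-1}\}$. Pin words: given a pin sequence $(p_1,\dots,p_n)$ and an origin $p_0$ such that $(p_0,\dots,p_n)$ is a pin sequence, each $p_i$ ($i\ge1$) is encoded by $U$ (resp. $D,L,R$) if $p_i$ separates $p_{i-1}$ from $\{p_0,\dots,p_{i-2}\}$ and lies above (resp. below, left of, right of) the bounding box of $\{p_0,\dots,p_{i-1}\}$, and by $1$ (resp. $2,3,4$) if $p_i$ is independent from $\{p_0,\dots,p_{i-1}\}$ and lies in the up-right (resp. up-left, bottom-left, bottom-right) corner region of that bounding box; the point $p_i$ is said to correspond to the $i$-th letter. Letters $1,2,3,4$ are numerals, $U,D,L,R$ directions. A strict pin word is a pin word of length $\ge2$ whose first letter is a numeral and all others directions. A point $x$ lies in quadrant $1$ (resp. $2,3,4$) with respect to a set $S$ if it is above and to the right of (resp. above-left, below-left, below-right of) all points of $S$. Order $\preceq$ on pin words: write $u=u^{(1)}\cdots u^{(j)}$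 as a product of strong numeral-led factors (each a numeral followed by any number of directions). Then $u\preceq w$ if $w$ can be written $w=v^{(1)}w^{(1)}\cdots v^{(j)}w^{(j)}v^{(j+1)}$ such that for each $i$: if $w^{(i)}$ begins with a numeral then $w^{(i)}=u^{(i)}$; if $w^{(i)}$ begins with a direction, then $v^{(i)}$ is nonempty, the point $p_k$ corresponding to the first letter of $w^{(i)}$ (in the pin sequence of $w$) lies in the quadrant given by the first letter of $u^{(i)}$ with respect to $\{p_0,\dots,p_{k-2}\}$, and all other letters of $u^{(i)}$ and $w^{(i)}$ agree. For a strict pin word $u=u'u''$ with $|u'|=2$, $\phi(u)=\varphi(u')u''$ with $\varphi$: $1R\mapsto RUR$, $2R\mapsto LUR$, $3R\mapsto LDR$, $4R\mapsto RDR$, $1L\mapsto RUL$, $2L\mapsto LUL$, $3L\mapsto LDL$, $4L\mapsto RDL$, $1U\mapsto URU$, $2U\mapsto ULU$, $3U\mapsto DLU$, $4U\mapsto DRU$, $1D\mapsto URD$, $2D\mapsto ULD$, $3D\mapsto DLD$, $4D\mapsto DRD$. A factor is a contiguous subword. *)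

theory Defs
  imports Main "HOL-Library.Sublist"
begin

type_synonym pin = "int \<times> int"

datatype letter = N1 | N2 | N3 | N4 | U | D | L | R

definition is_numeral :: "letter \<Rightarrow> bool" where
  "is_numeral c \<longleftrightarrow> c \<in> {N1, N2, N3, N4}"

definition is_direction :: "letter \<Rightarrow> bool" where
  "is_direction c \<longleftrightarrow> c \<in> {U, D, L, R}"

definition above :: "pin \<Rightarrow> pin set \<Rightarrow> bool" where
  "above p S \<longleftrightarrow> (\<forall>q\<in>S. snd q < snd p)"
definition below :: "pin \<Rightarrow> pin set \<Rightarrow> bool" where
  "below p S \<longleftrightarrow> (\<forall>q\<in>S. snd p < snd q)"
definition left_of :: "pin \<Rightarrow> pin set \<Rightarrow> bool" where
  "left_of p S \<longleftrightarrow> (\<forall>q\<in>S. fst p < fst q)"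
definition right_of :: "pin \<Rightarrow> pin set \<Rightarrow> bool" where
  "right_of p S \<longleftrightarrow> (\<forall>q\<in>S. fst q < fst p)"

definition outside_bbox :: "pin \<Rightarrow> pin set \<Rightarrow> bool" where
  "outside_bbox p S \<longleftrightarrow> above p S \<or> below p S \<or> left_of p S \<or> right_of p S"

fun quadrant :: "letter \<Rightarrow> pin \<Rightarrow> pin set \<Rightarrow> bool" where
  "quadrant N1 p S \<longleftrightarrow> above p S \<and> right_of p S"
| "quadrant N2 p S \<longleftrightarrow> above p S \<and> left_of p S"
| "quadrant N3 p S \<longleftrightarrow> below p S \<and> left_of p S"
| "quadrant N4 p S \<longleftrightarrow> below p S \<and> right_of p S"
| "quadrant _ p S \<longleftrightarrow> False"

definition separates_h :: "pin \<Rightarrow> pin set \<Rightarrow> pin set \<Rightarrow> bool" where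
  "separates_h p P Q \<longleftrightarrow>
     ((\<forall>a\<in>P. snd a < snd p) \<and> (\<forall>b\<in>Q. snd p < snd b)) \<or>
     ((\<forall>a\<in>P. snd p < snd a) \<and> (\<forall>b\<in>Q. snd b < snd p))"
definition separates_v :: "pin \<Rightarrow> pin set \<Rightarrow> pin set \<Rightarrow> bool" where
  "separates_v p P Q \<longleftrightarrow>
     ((\<forall>a\<in>P. fst a < fst p) \<and> (\<forall>b\<in>Q. fst p < fst b)) \<or>
     ((\<forall>a\<in>P. fst p < fst a) \<and> (\<forall>b\<in>Q. fst b < fst p))"
definition separates :: "pin \<Rightarrow> pin set \<Rightarrow> pin set \<Rightarrow> bool" where
  "separates p P Q \<longleftrightarrow> separates_h p P Q \<or> separates_v p P Q"

definition independent :: "pin \<Rightarrow> pin set \<Rightarrow> bool" where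
  "independent p S \<longleftrightarrow> (\<forall>a\<in>S. \<forall>b\<in>S. \<not> separates p {a} {b})"

text \<open>Pin sequence (p_1,...,p_k) stored 0-indexed as ps.\<close>
definition pin_seq :: "pin list \<Rightarrow> bool" where
  "pin_seq ps \<longleftrightarrow> distinct (map fst ps) \<and> distinct (map snd ps) \<and>
     (\<forall>i. 1 \<le> i \<and> i < length ps \<longrightarrow>
        outside_bbox (ps ! i) (set (take i ps)) \<and>
        (separates (ps ! i) {ps ! (i - 1)} (set (take (i - 1) ps)) \<or>
         independent (ps ! i) (set (take i ps))))"

text \<open>Encoding of a point p with previous point prev, earlier points E (so all points so far
  are insert prev E). Direction letters require E nonempty (convention: the first letter of a
  pin word is a numeral).\<close>
definition encodes_letter :: "letter \<Rightarrow> pin \<Rightarrow> pin \<Rightarrow> pin set \<Rightarrow> bool" where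
  "encodes_letter c p prev E \<longleftrightarrow>
     (if is_direction c then
        E \<noteq> {} \<and> separates p {prev} E \<and>
        (case c of U \<Rightarrow> above p (insert prev E) | D \<Rightarrow> below p (insert prev E)
                 | L \<Rightarrow> left_of p (insert prev E) | R \<Rightarrow> right_of p (insert prev E)
                 | _ \<Rightarrow> False)
      else independent p (insert prev E) \<and> quadrant c p (insert prev E))"

text \<open>ps = [p_0, p_1, ..., p_n] (origin p_0 included) realizes the pin word w of length n.\<close>
definition realizes :: "pin list \<Rightarrow> letter list \<Rightarrow> bool" where
  "realizes ps w \<longleftrightarrow> length ps = length w + 1 \<and> pin_seq ps \<and>
     (\<forall>i < length w. encodes_letter (w ! i) (ps ! (i + 1)) (ps ! i) (set (take i ps)))"

definition pin_word :: "letter list \<Rightarrow> bool" where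
  "pin_word w \<longleftrightarrow> (\<exists>ps. realizes ps w)"

definition strict_pin_word :: "letter list \<Rightarrow> bool" where
  "strict_pin_word w \<longleftrightarrow> pin_word w \<and> length w \<ge> 2 \<and> is_numeral (hd w) \<and>
     (\<forall>c\<in>set (tl w). is_direction c)"

definition numeral_factorization :: "letter list \<Rightarrow> letter list list \<Rightarrow> bool" where
  "numeral_factorization u us \<longleftrightarrow> concat us = u \<and>
     (\<forall>f\<in>set us. f \<noteq> [] \<and> is_numeral (hd f) \<and> (\<forall>c\<in>set (tl f). is_direction c))"

text \<open>The order u \<preceq> w. w = v1 w1 ... vj wj v(j+1); k is the (1-based) index in w of the
  first letter of wi, and ps = [p_0,...,p_n] is the pin sequence of w.\<close>
definition pin_le :: "letter list \<Rightarrow> letter list \<Rightarrow> bool" where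
  "pin_le u w \<longleftrightarrow>
     (\<exists>us vs ws vlast ps.
        numeral_factorization u us \<and> length vs = length us \<and> length ws = length us \<and>
        w = concat (map2 (@) vs ws) @ vlast \<and> realizes ps w \<and>
        (\<forall>i < length us.
           (let k = length (concat (map2 (@) (take i vs) (take i ws))) + length (vs ! i) + 1 in
            ws ! i \<noteq> [] \<and>
            (is_numeral (hd (ws ! i)) \<longrightarrow> ws ! i = us ! i) \<and>
            (is_direction (hd (ws ! i)) \<longrightarrow>
               vs ! i \<noteq> [] \<and>
               quadrant (hd (us ! i)) (ps ! k) (set (take (k - 1) ps)) \<and>
               tl (ws ! i) = tl (us ! i)))))"

fun varphi :: "letter \<Rightarrow> letter \<Rightarrow> letter list" where
  "varphi N1 R = [R, U, R]" | "varphi N2 R = [L, U, R]"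
| "varphi N3 R = [L, D, R]" | "varphi N4 R = [R, D, R]"
| "varphi N1 L = [R, U, L]" | "varphi N2 L = [L, U, L]"
| "varphi N3 L = [L, D, L]" | "varphi N4 L = [R, D, L]"
| "varphi N1 U = [U, R, U]" | "varphi N2 U = [U, L, U]"
| "varphi N3 U = [D, L, U]" | "varphi N4 U = [D, R, U]"
| "varphi N1 D = [U, R, D]" | "varphi N2 D = [U, L, D]"
| "varphi N3 D = [D, L, D]" | "varphi N4 D = [D, R, D]"
| "varphi _ _ = []"

definition phi :: "letter list \<Rightarrow> letter list" where
  "phi u = varphi (u ! 0) (u ! 1) @ drop 2 u"

end

theory Submission
  imports Defs
begin


fun bey :: "letter \<Rightarrow> pin \<Rightarrow> pin set \<Rightarrow> bool" where
  "bey U p S = above p S" | "bey D p S = below p S"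
| "bey L p S = left_of p S" | "bey R p S = right_of p S" | "bey _ p S = False"

fun vert :: "letter \<Rightarrow> bool" where
  "vert U = True" | "vert D = True" | "vert _ = False"

lemma dir_cases: "is_direction c \<Longrightarrow> c = U \<or> c = D \<or> c = L \<or> c = R"
  by (auto simp: is_direction_def)
lemma num_cases: "is_numeral c \<Longrightarrow> c = N1 \<or> c = N2 \<or> c = N3 \<or> c = N4"
  by (auto simp: is_numeral_def)

lemma sep_vert:
  assumes "E \<noteq> {}" "separates p {q} E" "bey a p (insert q E)" "vert a" "is_direction a"
  shows "(fst q < fst p \<and> (\<forall>e\<in>E. fst p < fst e)) \<or> (fst p < fst q \<and> (\<forall>e\<in>E. fst e < fst p))"
proof -
  obtain e where e: "e \<in> E" using assms(1) by blast
  have a: "a = U \<or> a = D" using assms(4,5) dir_cases by fastforce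
  have "\<not> separates_h p {q} E"
    using a assms(3) e by (auto simp: separates_h_def above_def below_def) (meson e less_asym)+
  thus ?thesis using assms(2) by (auto simp: separates_def separates_v_def)
qed

lemma sep_hor:
  assumes "E \<noteq> {}" "separates p {q} E" "bey a p (insert q E)" "\<not> vert a" "is_direction a"
  shows "(snd q < snd p \<and> (\<forall>e\<in>E. snd p < snd e)) \<or> (snd p < snd q \<and> (\<forall>e\<in>E. snd e < snd p))"
proof -
  obtain e where e: "e \<in> E" using assms(1) by blast
  have a: "a = L \<or> a = R" using assms(4,5) dir_cases by fastforce
  have "\<not> separates_v p {q} E"
    using a assms(3) e by (auto simp: separates_v_def left_of_def right_of_def) (meson e less_asym)+
  thus ?thesis using assms(2) by (auto simp: separates_def separates_h_def)
qed


lemma perp_geo: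
  assumes "E \<noteq> {}" "separates p {q} E" "bey a p (insert q E)"
    "separates r {p} (insert q E)" "bey b r (insert p (insert q E))"
    "is_direction a" "is_direction b"
  shows "vert a \<noteq> vert b"
proof
  assume v: "vert a = vert b"
  obtain e where e: "e \<in> E" using assms(1) by blast
  show False
  proof (cases "vert a")
    case True
    have 1: "(fst q < fst p \<and> (\<forall>e\<in>E. fst p < fst e)) \<or> (fst p < fst q \<and> (\<forall>e\<in>E. fst e < fst p))"
      using sep_vert[OF assms(1-3) True assms(6)] .
    have 2: "(fst p < fst r \<and> (\<forall>e\<in>insert q E. fst r < fst e)) \<or> (fst r < fst p \<and> (\<forall>e\<in>insert q E. fst e < fst r))"
      using sep_vert[OF _ assms(4,5)] True v assms(7) by auto
    from 1 2 e show False by fastforce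
  next
    case False
    have 1: "(snd q < snd p \<and> (\<forall>e\<in>E. snd p < snd e)) \<or> (snd p < snd q \<and> (\<forall>e\<in>E. snd e < snd p))"
      using sep_hor[OF assms(1-3) False assms(6)] .
    have 2: "(snd p < snd r \<and> (\<forall>e\<in>insert q E. snd r < snd e)) \<or> (snd r < snd p \<and> (\<forall>e\<in>insert q E. snd e < snd r))"
      using sep_hor[OF _ assms(4,5)] False v assms(7) by auto
    from 1 2 e show False by fastforce
  qed
qed

lemma G:
  assumes "E \<noteq> {}" "separates p {q} E" "bey y p (insert q E)" "bey x q E"
    "is_direction x" "is_direction y" "vert x \<noteq> vert y"
  shows "bey x p E"
proof -
  obtain e where e: "e \<in> E" using assms(1) by blast
  show ?thesis
  proof (cases "vert y")
    case True
    have 1: "(fst q < fst p \<and> (\<forall>e\<in>E. fst p < fst e)) \<or> (fst p < fst q \<and> (\<forall>e\<in>E. fst e < fst p))"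
      using sep_vert[OF assms(1-3) True assms(6)] .
    have "x = L \<or> x = R" using True assms(5,7) dir_cases by fastforce
    then show ?thesis using 1 assms(4) e by (auto simp: left_of_def right_of_def) fastforce+
  next
    case False
    have 1: "(snd q < snd p \<and> (\<forall>e\<in>E. snd p < snd e)) \<or> (snd p < snd q \<and> (\<forall>e\<in>E. snd e < snd p))"
      using sep_hor[OF assms(1-3) False assms(6)] .
    have "x = U \<or> x = D" using False assms(5,7) dir_cases by fastforce
    then show ?thesis using 1 assms(4) e by (auto simp: above_def below_def) fastforce+
  qed
qed

lemma excl: "E \<noteq> {} \<Longrightarrow> above p E \<Longrightarrow> below p E \<Longrightarrow> False"
   "E \<noteq> {} \<Longrightarrow> left_of p E \<Longrightarrow> right_of p E \<Longrightarrow> False"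
  unfolding above_def below_def left_of_def right_of_def
  by (meson all_not_in_conv less_asym)+

lemma F:
  assumes "E \<noteq> {}" "is_direction x" "is_direction y" "is_direction d"
    "vert x \<noteq> vert y" "vert d \<noteq> vert y" "bey x p E" "bey y p E" "is_numeral c"
  shows "quadrant c p E \<longleftrightarrow> (varphi c d ! 0 = x \<and> varphi c d ! 1 = y)"
  using dir_cases[OF assms(2)] dir_cases[OF assms(3)] dir_cases[OF assms(4)] num_cases[OF assms(9)]
    assms(5-8) excl[OF assms(1), of p]
  by auto

lemma comp_lemma:
  assumes "quadrant c q E" "is_numeral c" "is_direction y"
  shows "bey (varphi c y ! 1) q E \<and> is_direction (varphi c y ! 1) \<and> vert (varphi c y ! 1) \<noteq> vert y"
  using num_cases[OF assms(2)] dir_cases[OF assms(3)] assms(1)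
  by (auto simp: is_direction_def)



lemma take_Suc_set: "i < length ps \<Longrightarrow> set (take (Suc i) ps) = insert (ps ! i) (set (take i ps))"
  by (simp add: take_Suc_conv_app_nth)

lemma real_dir:
  assumes "realizes ps w" "i < length w" "is_direction (w ! i)"
  shows "set (take i ps) \<noteq> {} \<and> separates (ps ! Suc i) {ps ! i} (set (take i ps)) \<and>
         bey (w ! i) (ps ! Suc i) (set (take (Suc i) ps))"
proof -
  have e: "encodes_letter (w ! i) (ps ! (i + 1)) (ps ! i) (set (take i ps))"
    using assms(1,2) by (simp add: realizes_def)
  have l: "i < length ps" using assms(1,2) by (simp add: realizes_def)
  show ?thesis using e dir_cases[OF assms(3)] assms(3) take_Suc_set[OF l]
    by (auto simp: encodes_letter_def)
qed

lemma real_num: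
  assumes "realizes ps w" "i < length w" "is_numeral (w ! i)"
  shows "quadrant (w ! i) (ps ! Suc i) (set (take (Suc i) ps))"
proof -
  have e: "encodes_letter (w ! i) (ps ! (i + 1)) (ps ! i) (set (take i ps))"
    using assms(1,2) by (simp add: realizes_def)
  have l: "i < length ps" using assms(1,2) by (simp add: realizes_def)
  show ?thesis using e num_cases[OF assms(3)] take_Suc_set[OF l]
    by (auto simp: encodes_letter_def is_direction_def)
qed

lemma strict_facts:
  assumes "strict_pin_word w"
  shows "length w \<ge> 2" "is_numeral (w ! 0)" "\<And>j. 1 \<le> j \<Longrightarrow> j < length w \<Longrightarrow> is_direction (w ! j)"
    "\<exists>ps. realizes ps w"
proof -
  show "length w \<ge> 2" using assms by (simp add: strict_pin_word_def)
  then show "is_numeral (w ! 0)" using assms by (cases w) (auto simp: strict_pin_word_def)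
  show "\<exists>ps. realizes ps w" using assms by (simp add: strict_pin_word_def pin_word_def)
  fix j assume "1 \<le> j" "j < length w"
  then have "w ! j \<in> set (tl w)"
    by (cases w) auto
  then show "is_direction (w ! j)" using assms by (simp add: strict_pin_word_def)
qed

lemma num_not_dir: "is_numeral c \<Longrightarrow> \<not> is_direction c"
  by (auto simp: is_numeral_def is_direction_def)

lemma perp_word:
  assumes "realizes ps w" "1 \<le> i" "Suc i < length w" "is_direction (w ! i)" "is_direction (w ! Suc i)"
  shows "vert (w ! i) \<noteq> vert (w ! Suc i)"
proof -
  have l: "Suc i < length ps" using assms(1,3) by (simp add: realizes_def)
  have a: "set (take i ps) \<noteq> {} \<and> separates (ps ! Suc i) {ps ! i} (set (take i ps)) \<and>
         bey (w ! i) (ps ! Suc i) (set (take (Suc i) ps))" using real_dir[OF assms(1) _ assms(4)] assms(3) by simp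
  have b: "set (take (Suc i) ps) \<noteq> {} \<and> separates (ps ! Suc (Suc i)) {ps ! Suc i} (set (take (Suc i) ps)) \<and>
         bey (w ! Suc i) (ps ! Suc (Suc i)) (set (take (Suc (Suc i)) ps))" using real_dir[OF assms(1,3,5)] .
  have s1: "set (take (Suc i) ps) = insert (ps ! i) (set (take i ps))" using l take_Suc_set[of i ps] by simp
  have s2: "set (take (Suc (Suc i)) ps) = insert (ps ! Suc i) (insert (ps ! i) (set (take i ps)))"
    using l take_Suc_set[of "Suc i" ps] s1 by simp
  show ?thesis using perp_geo[of "set (take i ps)" "ps ! Suc i" "ps ! i" "w ! i" "ps ! Suc (Suc i)" "w ! Suc i"]
    a b s1 s2 assms(4,5) by auto
qed


lemma bey_mono: "bey a p (insert q E) \<Longrightarrow> bey a p E"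
  by (cases a) (auto simp: above_def below_def left_of_def right_of_def)

lemma varphi_facts:
  assumes "is_numeral c" "is_direction d"
  shows "length (varphi c d) = 3" "varphi c d ! 2 = d"
  using num_cases[OF assms(1)] dir_cases[OF assms(2)] by auto

lemma phi_facts:
  assumes "length x \<ge> 2" "is_numeral (x ! 0)" "is_direction (x ! 1)"
  shows "length (phi x) = Suc (length x)"
    "j < 2 \<Longrightarrow> phi x ! j = varphi (x ! 0) (x ! 1) ! j"
    "1 \<le> j \<Longrightarrow> j < length x \<Longrightarrow> phi x ! Suc j = x ! j"
proof -
  note vf = varphi_facts[OF assms(2,3)]
  show "length (phi x) = Suc (length x)" using vf assms(1) by (simp add: phi_def)
  show "j < 2 \<Longrightarrow> phi x ! j = varphi (x ! 0) (x ! 1) ! j" using vf by (simp add: phi_def nth_append)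
  assume j: "1 \<le> j" "j < length x"
  show "phi x ! Suc j = x ! j"
  proof (cases "j = 1")
    case True then show ?thesis using vf by (simp add: phi_def nth_append numeral_2_eq_2)
  next
    case False
    then have "Suc (Suc (j - 2)) = j" using j by simp
    then show ?thesis using vf j by (simp add: phi_def nth_append)
  qed
qed

lemma quad_char:
  assumes sw: "strict_pin_word w" and r: "realizes ps w" and s: "1 \<le> s" "Suc s < length w"
    and c: "is_numeral c"
  shows "quadrant c (ps ! Suc s) (set (take s ps)) \<longleftrightarrow>
     (phi w ! s = varphi c (w ! Suc s) ! 0 \<and> phi w ! Suc s = varphi c (w ! Suc s) ! 1)"
proof -
  note sf = strict_facts[OF sw]
  have l: "s < length ps" using r s by (simp add: realizes_def)
  define E where "E = set (take s ps)"
  define p where "p = ps ! Suc s"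
  define q where "q = ps ! s"
  define y where "y = w ! s"
  define d where "d = w ! Suc s"
  have dy: "is_direction y" using sf(3) s by (simp add: y_def)
  have dd: "is_direction d" using sf(3) s by (simp add: d_def)
  have ins: "set (take (Suc s) ps) = insert q E" using take_Suc_set[OF l] by (simp add: q_def E_def)
  have A: "E \<noteq> {} \<and> separates p {q} E \<and> bey y p (insert q E)"
    using real_dir[OF r _ dy[unfolded y_def]] s ins by (simp add: E_def p_def q_def y_def)
  have vdy: "vert d \<noteq> vert y" using perp_word[OF r s(1,2)] dy dd by (simp add: y_def d_def)
  have p1: "phi w ! Suc s = y" using phi_facts(3)[OF sf(1,2) sf(3)] s by (simp add: y_def)
  obtain x where x: "phi w ! s = x" "bey x q E" "is_direction x" "vert x \<noteq> vert y"
  proof (cases "s = 1")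
    case True
    have qd: "quadrant (w ! 0) (ps ! 1) (set (take 1 ps))" using real_num[OF r _ sf(2)] sf(1) by force
    have "bey (varphi (w ! 0) y ! 1) q E \<and> is_direction (varphi (w ! 0) y ! 1) \<and> vert (varphi (w ! 0) y ! 1) \<noteq> vert y"
      using comp_lemma[OF qd sf(2) dy] True by (simp add: q_def E_def)
    moreover have "phi w ! s = varphi (w ! 0) y ! 1"
      using phi_facts(2)[OF sf(1,2) sf(3)] sf(1) True by (simp add: y_def)
    ultimately show ?thesis using that by blast
  next
    case False
    then have s2: "s - 1 \<ge> 1" "Suc (s - 1) = s" using s by auto
    have dx: "is_direction (w ! (s - 1))" using sf(3) s2 s by simp
    have "bey (w ! (s-1)) q E" using real_dir[OF r _ dx] s s2 by (simp add: q_def E_def)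
    moreover have "vert (w ! (s - 1)) \<noteq> vert y" using perp_word[OF r s2(1)] s2 s dx dy by (simp add: y_def)
    moreover have "phi w ! s = w ! (s - 1)"
      using phi_facts(3)[OF sf(1,2) sf(3), of "s - 1"] s2 s by simp
    ultimately show ?thesis using that dx by blast
  qed
  have bx: "bey x p E" using G[of E p q y x] A x dy by blast
  have by': "bey y p E" using A bey_mono by blast
  show ?thesis using F[OF _ x(3) dy dd x(4) vdy bx by' c] A x(1) p1
    by (auto simp: p_def E_def d_def)
qed




lemma letter_cases: "is_numeral c \<or> is_direction c"
  by (cases c) (auto simp: is_numeral_def is_direction_def)

lemma fact_single:
  assumes "strict_pin_word u" "numeral_factorization u us"
  shows "us = [u]"
proof -
  have cu: "concat us = u" and fs: "\<forall>f\<in>set us. f \<noteq> [] \<and> is_numeral (hd f)"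
    using assms(2) by (auto simp: numeral_factorization_def)
  have dirs: "\<forall>c\<in>set (tl u). is_direction c" "u \<noteq> []"
    using assms(1) by (auto simp: strict_pin_word_def)
  show ?thesis
  proof (cases us)
    case Nil then show ?thesis using cu dirs by simp
  next
    case (Cons f r)
    show ?thesis
    proof (cases r)
      case Nil then show ?thesis using Cons cu by simp
    next
      case (Cons g r')
      have f: "f \<noteq> []" "g \<noteq> []" "is_numeral (hd g)" using fs Cons \<open>us = f # r\<close> by auto
      have "u = f @ g @ concat r'" using cu Cons \<open>us = f # r\<close> by simp
      then have "tl u = tl f @ g @ concat r'" using f by simp
      then have "hd g \<in> set (tl u)" using f by (cases g) auto
      then show ?thesis using dirs f num_not_dir by blast
    qed
  qed
qed

lemma pin_le_iff:
  assumes su: "strict_pin_word u" and sw: "strict_pin_word w"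
  shows "pin_le u w \<longleftrightarrow> (\<exists>ps. realizes ps w \<and> (prefix u w \<or>
     (\<exists>s. 1 \<le> s \<and> s + length u \<le> length w \<and> (\<forall>j. 1 \<le> j \<and> j < length u \<longrightarrow> u ! j = w ! (s + j)) \<and>
         quadrant (u ! 0) (ps ! Suc s) (set (take s ps)))))"
  (is "?L \<longleftrightarrow> ?R")
proof
  note uf = strict_facts[OF su] and wf = strict_facts[OF sw]
  assume ?L
  then obtain us vs ws vlast ps where H: "numeral_factorization u us" "length vs = length us"
    "length ws = length us" "w = concat (map2 (@) vs ws) @ vlast" "realizes ps w"
    "\<forall>i < length us.
           (let k = length (concat (map2 (@) (take i vs) (take i ws))) + length (vs ! i) + 1 in
            ws ! i \<noteq> [] \<and>
            (is_numeral (hd (ws ! i)) \<longrightarrow> ws ! i = us ! i) \<and>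
            (is_direction (hd (ws ! i)) \<longrightarrow>
               vs ! i \<noteq> [] \<and>
               quadrant (hd (us ! i)) (ps ! k) (set (take (k - 1) ps)) \<and>
               tl (ws ! i) = tl (us ! i)))"
    unfolding pin_le_def by blast
  have us: "us = [u]" using fact_single[OF su H(1)] .
  obtain v where v: "vs = [v]" using H(2) us by (auto simp: length_Suc_conv)
  obtain w1 where w1: "ws = [w1]" using H(3) us by (auto simp: length_Suc_conv)
  have w: "w = v @ w1 @ vlast" using H(4) v w1 by simp
  have C: "w1 \<noteq> []" "is_numeral (hd w1) \<longrightarrow> w1 = u"
    "is_direction (hd w1) \<longrightarrow> v \<noteq> [] \<and> quadrant (hd u) (ps ! (length v + 1)) (set (take (length v) ps)) \<and> tl w1 = tl u"
    using H(6) us v w1 by (auto simp: Let_def)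
  have hdw: "w ! length v = hd w1" using w C(1) by (simp add: nth_append hd_conv_nth)
  show ?R
  proof (cases "is_numeral (hd w1)")
    case True
    have "v = []"
    proof (rule ccontr)
      assume "v \<noteq> []"
      then have "1 \<le> length v" "length v < length w" using w C(1) by (auto simp: Suc_le_eq)
      then have "is_direction (w ! length v)" using wf(3) by blast
      then show False using True hdw num_not_dir by simp
    qed
    then show ?thesis using H(5) w C(2) True by auto
  next
    case False
    then have dh: "is_direction (hd w1)" using letter_cases by blast
    define s where "s = length v"
    have q: "v \<noteq> []" "quadrant (hd u) (ps ! Suc s) (set (take s ps))" "tl w1 = tl u"
      using C(3) dh by (auto simp: s_def)
    have "length w1 - 1 = length u - 1" using q(3) by (metis length_tl)
    then have lw1: "length w1 = length u" using C(1) uf(1) by (cases w1) auto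
    have "1 \<le> s" using q(1) by (simp add: s_def Suc_le_eq)
    moreover have "s + length u \<le> length w" using w lw1 by (simp add: s_def)
    moreover have "\<forall>j. 1 \<le> j \<and> j < length u \<longrightarrow> u ! j = w ! (s + j)"
    proof (intro allI impI)
      fix j assume j: "1 \<le> j \<and> j < length u"
      have "u ! j = tl u ! (j - 1)" using j by (cases u) (auto simp: nth_Cons')
      also have "\<dots> = tl w1 ! (j - 1)" using q(3) by simp
      also have "\<dots> = w1 ! j" using j C(1) by (cases w1) (auto simp: nth_Cons')
      also have "\<dots> = w ! (s + j)" using w j lw1 by (simp add: s_def nth_append)
      finally show "u ! j = w ! (s + j)" .
    qed
    moreover have "hd u = u ! 0" using uf(1) by (cases u) auto
    ultimately show ?thesis using H(5) q(2) by metis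
  qed
next
  note uf = strict_facts[OF su] and wf = strict_facts[OF sw]
  assume ?R
  then obtain ps where r: "realizes ps w" and D: "prefix u w \<or>
     (\<exists>s. 1 \<le> s \<and> s + length u \<le> length w \<and> (\<forall>j. 1 \<le> j \<and> j < length u \<longrightarrow> u ! j = w ! (s + j)) \<and>
         quadrant (u ! 0) (ps ! Suc s) (set (take s ps)))" by blast
  have nf: "numeral_factorization u [u]"
    using su by (auto simp: numeral_factorization_def strict_pin_word_def)
  have hu: "hd u = u ! 0" using uf(1) by (cases u) auto
  from D show ?L
  proof
    assume "prefix u w"
    then obtain t where t: "w = u @ t" by (auto simp: prefix_def)
    have "hd u = u ! 0" using uf(1) by (cases u) auto
    then have "is_numeral (hd u)" "\<not> is_direction (hd u)" using uf(2) num_not_dir by auto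
    then show ?L unfolding pin_le_def
      using nf t r uf(1)
      by (intro exI[of _ "[u]"] exI[of _ "[[]]"] exI[of _ "[u]"] exI[of _ t] exI[of _ ps]) (auto simp: Let_def)
  next
    assume "\<exists>s. 1 \<le> s \<and> s + length u \<le> length w \<and> (\<forall>j. 1 \<le> j \<and> j < length u \<longrightarrow> u ! j = w ! (s + j)) \<and>
         quadrant (u ! 0) (ps ! Suc s) (set (take s ps))"
    then obtain s where s: "1 \<le> s" "s + length u \<le> length w" "\<forall>j. 1 \<le> j \<and> j < length u \<longrightarrow> u ! j = w ! (s + j)"
         "quadrant (u ! 0) (ps ! Suc s) (set (take s ps))" by blast
    define v where "v = take s w"
    define w1 where "w1 = take (length u) (drop s w)"
    define vl where "vl = drop (s + length u) w"
    have w: "w = v @ w1 @ vl" unfolding v_def w1_def vl_def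
      by (metis append_take_drop_id drop_drop add.commute)
    have lv: "length v = s" using s by (simp add: v_def)
    have lw1: "length w1 = length u" using s by (simp add: w1_def)
    have w1ne: "w1 \<noteq> []" using lw1 uf(1) by auto
    have hw1: "hd w1 = w ! s" using w1ne s uf(1) by (simp add: w1_def hd_conv_nth)
    have dh: "is_direction (hd w1)" using hw1 wf(3) s uf(1) by simp
    have vne: "v \<noteq> []" using lv s by auto
    have tl: "tl w1 = tl u"
    proof (rule nth_equalityI)
      show "length (tl w1) = length (tl u)" using lw1 by simp
      fix i assume "i < length (tl w1)"
      then have i: "Suc i < length u" using lw1 by simp
      have "tl w1 ! i = w ! (s + Suc i)" using i s by (simp add: nth_tl w1_def)
      also have "\<dots> = u ! Suc i" using s(3) i by simp
      finally show "tl w1 ! i = tl u ! i" using i by (simp add: nth_tl)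
    qed
    show ?L unfolding pin_le_def
      using nf w r w1ne dh num_not_dir[of "hd w1"] vne s(4) lv tl hu
      by (intro exI[of _ "[u]"] exI[of _ "[v]"] exI[of _ "[w1]"] exI[of _ vl] exI[of _ ps]) (auto simp: Let_def)
  qed
qed



lemma sublist_iff_idx:
  "sublist xs ys \<longleftrightarrow> (\<exists>s. s + length xs \<le> length ys \<and> (\<forall>j<length xs. xs ! j = ys ! (s + j)))"
proof
  assume "sublist xs ys"
  then obtain a b where "ys = a @ xs @ b" by (auto simp: sublist_def)
  then show "\<exists>s. s + length xs \<le> length ys \<and> (\<forall>j<length xs. xs ! j = ys ! (s + j))"
    by (intro exI[of _ "length a"]) (auto simp: nth_append)
next
  assume "\<exists>s. s + length xs \<le> length ys \<and> (\<forall>j<length xs. xs ! j = ys ! (s + j))"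
  then obtain s where s: "s + length xs \<le> length ys" "\<forall>j<length xs. xs ! j = ys ! (s + j)" by blast
  have "take (length xs) (drop s ys) = xs"
    by (rule nth_equalityI) (use s in auto)
  then have "ys = take s ys @ xs @ drop (length xs) (drop s ys)"
    by (metis append_take_drop_id)
  then show "sublist xs ys" by (metis sublist_appendI)
qed

lemma varphi_inj:
  assumes "is_numeral c" "is_numeral c'" "is_direction d"
    "varphi c d ! 0 = varphi c' d ! 0" "varphi c d ! 1 = varphi c' d ! 1"
  shows "c = c'"
  using num_cases[OF assms(1)] num_cases[OF assms(2)] dir_cases[OF assms(3)] assms(4,5) by auto

lemma phi_prefix:
  assumes "length u \<ge> 2" "w = u @ t"
  shows "phi w = phi u @ t"
proof -
  have "w ! 0 = u ! 0" "w ! 1 = u ! 1" using assms by (auto simp: nth_append)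
  moreover have "drop 2 w = drop 2 u @ t" using assms by simp
  ultimately show ?thesis by (simp add: phi_def)
qed

theorem lemma7:
  assumes "strict_pin_word u" and "strict_pin_word w"
  shows "pin_le u w \<longleftrightarrow> sublist (phi u) (phi w)"
proof -
  note su = assms(1) and sw = assms(2)
  note uf = strict_facts[OF su] and wf = strict_facts[OF sw]
  have du1: "is_direction (u ! 1)" using uf(1) uf(3) by simp
  have dw1: "is_direction (w ! 1)" using wf(1) wf(3) by simp
  note pu = phi_facts[OF uf(1,2) du1] and pw = phi_facts[OF wf(1,2) dw1]
  have vu2: "varphi (u ! 0) (u ! 1) ! 2 = u ! 1" using varphi_facts[OF uf(2) du1] by simp
  have vw2: "varphi (w ! 0) (w ! 1) ! 2 = w ! 1" using varphi_facts[OF wf(2) dw1] by simp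
  have pu2: "phi u ! 2 = u ! 1" using pu(3)[of 1] uf(1) by (simp add: numeral_2_eq_2)
  show ?thesis
  proof
    assume "pin_le u w"
    then obtain ps where r: "realizes ps w" and D: "prefix u w \<or>
     (\<exists>s. 1 \<le> s \<and> s + length u \<le> length w \<and> (\<forall>j. 1 \<le> j \<and> j < length u \<longrightarrow> u ! j = w ! (s + j)) \<and>
         quadrant (u ! 0) (ps ! Suc s) (set (take s ps)))" using pin_le_iff[OF su sw] by blast
    from D show "sublist (phi u) (phi w)"
    proof
      assume "prefix u w"
      then obtain t where "w = u @ t" by (auto simp: prefix_def)
      then show ?thesis using phi_prefix uf(1) by (metis sublist_appendI append_Nil)
    next
      assume "\<exists>s. 1 \<le> s \<and> s + length u \<le> length w \<and> (\<forall>j. 1 \<le> j \<and> j < length u \<longrightarrow> u ! j = w ! (s + j)) \<and>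
         quadrant (u ! 0) (ps ! Suc s) (set (take s ps))"
      then obtain s where s: "1 \<le> s" "s + length u \<le> length w" "\<forall>j. 1 \<le> j \<and> j < length u \<longrightarrow> u ! j = w ! (s + j)"
         "quadrant (u ! 0) (ps ! Suc s) (set (take s ps))" by blast
      have ss: "Suc s < length w" using s uf(1) by simp
      have w1: "w ! Suc s = u ! 1" using s(3) uf(1) by simp
      have qc: "phi w ! s = varphi (u ! 0) (u ! 1) ! 0 \<and> phi w ! Suc s = varphi (u ! 0) (u ! 1) ! 1"
        using quad_char[OF sw r s(1) ss uf(2)] s(4) w1 by simp
      have "\<forall>j<length (phi u). phi u ! j = phi w ! (s + j)"
      proof (intro allI impI)
        fix j assume j: "j < length (phi u)"
        show "phi u ! j = phi w ! (s + j)"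
        proof (cases "j < 2")
          case True
          then have "j = 0 \<or> j = 1" by auto
          then show ?thesis by (elim disjE) (use qc pu(2)[of 0] pu(2)[of 1] in simp_all)
        next
          case False
          define i where "i = j - 1"
          have i: "j = Suc i" "1 \<le> i" "i < length u" using j pu(1) False by (auto simp: i_def)
          have "phi u ! j = u ! i" using pu(3) i by simp
          also have "\<dots> = w ! (s + i)" using s(3) i by simp
          also have "\<dots> = phi w ! Suc (s + i)" using pw(3)[of "s + i"] i s by simp
          finally show ?thesis using i by simp
        qed
      qed
      moreover have "s + length (phi u) \<le> length (phi w)" using pu(1) pw(1) s by simp
      ultimately show ?thesis using sublist_iff_idx by blast
    qed
  next
    assume "sublist (phi u) (phi w)"
    then obtain s where s: "s + length (phi u) \<le> length (phi w)" "\<forall>j<length (phi u). phi u ! j = phi w ! (s + j)"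
      using sublist_iff_idx by blast
    obtain ps where r: "realizes ps w" using wf(4) by blast
    have len: "s + length u \<le> length w" using s(1) pu(1) pw(1) by simp
    show "pin_le u w"
    proof (cases "s = 0")
      case True
      have e: "\<And>j. j < Suc (length u) \<Longrightarrow> phi u ! j = phi w ! j" using s(2) pu(1) True by simp
      have a: "u ! 1 = w ! 1" using e[of 2] pu2 pw(3)[of 1] wf(1) uf(1) by (simp add: numeral_2_eq_2)
      have "varphi (u ! 0) (u ! 1) ! 0 = varphi (w ! 0) (u ! 1) ! 0"
           "varphi (u ! 0) (u ! 1) ! 1 = varphi (w ! 0) (u ! 1) ! 1"
        using e[of 0] e[of 1] pu(2) pw(2) a uf(1) by force+
      then have a0: "u ! 0 = w ! 0" using varphi_inj[OF uf(2) wf(2) du1] by blast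
      have "take (length u) w = u"
      proof (rule nth_equalityI)
        show "length (take (length u) w) = length u" using len by simp
        fix i assume "i < length (take (length u) w)"
        then have i: "i < length u" by simp
        show "take (length u) w ! i = u ! i"
        proof (cases "i = 0")
          case True then show ?thesis using a0 i by simp
        next
          case False
          then have "phi u ! Suc i = u ! i" "phi w ! Suc i = w ! i" using pu(3) pw(3) i len by auto
          then show ?thesis using e[of "Suc i"] i by simp
        qed
      qed
      then have "prefix u w" by (metis prefix_def append_take_drop_id)
      then show ?thesis using pin_le_iff[OF su sw] r by blast
    next
      case False
      then have s1: "1 \<le> s" by simp
      have ss: "Suc s < length w" using len uf(1) by simp
      have tail: "\<forall>j. 1 \<le> j \<and> j < length u \<longrightarrow> u ! j = w ! (s + j)"
      proof (intro allI impI)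
        fix j assume j: "1 \<le> j \<and> j < length u"
        have "u ! j = phi u ! Suc j" using pu(3) j by simp
        also have "\<dots> = phi w ! (s + Suc j)" using s(2) pu(1) j by simp
        also have "\<dots> = w ! (s + j)" using pw(3)[of "s + j"] j len by simp
        finally show "u ! j = w ! (s + j)" .
      qed
      have w1: "w ! Suc s = u ! 1" using tail uf(1) by simp
      have "phi w ! s = varphi (u ! 0) (u ! 1) ! 0 \<and> phi w ! Suc s = varphi (u ! 0) (u ! 1) ! 1"
      proof -
        have "phi u ! 0 = phi w ! (s + 0)" "phi u ! 1 = phi w ! (s + 1)" using s(2) pu(1) uf(1) by (auto dest: spec[of _ 0] spec[of _ 1])
        then show ?thesis using pu(2)[of 0] pu(2)[of 1] by simp
      qed
      then have "quadrant (u ! 0) (ps ! Suc s) (set (take s ps))"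
        using quad_char[OF sw r s1 ss uf(2)] w1 by simp
      then show ?thesis using pin_le_iff[OF su sw] r s1 len tail by blast
    qed
  qed
qed

end
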